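(* Let $\sim$ denote either $\cong$ or $\simeq$, and let $A,B,C,D$ be type expressions. (1) $\bullet A\sim\bullet B$ if and only if $A\sim B$. (2) $A\to B\sim C\to D$ if and only if either (a) $A\sim C$ and $B\sim D$, or (b) $B\sim D\sim\top$.
   Context: Type expressions: fix a countably infinite set of type variables $X,Y,Z,\dots$. Pseudo type expressions are generated by $A::=X\mid A\to A\mid \bullet A\mid \mu X.A$ ($\mu$ binds $X$; $\alpha$-convertible expressions are identified; $\to$ associates to the right; $\bullet$ binds tighter than $\to$, which binds tighter than $\mu$). $A[B/X]$ denotes capture-avoiding substitution. $\top$ abbreviates $\mu X.\bullet X$, and $\bullet^n A$ denotes $A$ prefixed by $n$ copies of $\bullet$. The tail $t(A)$ is defined by $t(X)=X$, $t(A\to B)=t(B)$, $t(\bullet A)=\bullet t(A)$, $t(\mu X.A)=\mu X.t(A)$; it always has the form $\bullet^{m_0}\mu X_1.\bullet^{m_1}\mu X_2.\cdots\mu X_n.\bullet^{m_n}Y$. $A$ is a $\top$-variant iff $Y=X_i$ for some $1\le i\le n$ with $X_i\notin\{X_{i+1},\dots,X_n\}$ and $m_i+\dots+m_n\ge 1$. $A$ is proper in $X$ iff: a variable $Y$ is proper in $X$ iff $Y\neq X$; $\bullet A$ is always proper in $X$; $A\to B$ is proper in $X$ iff both $A,B$ are proper in $X$ or $B$ is a $\top$-variant; for $Y\ne X$, $\mu Y.A$ is proper in $X$ iff $A$ is proper in $X$ or $\mu Y.A$ is a $\top$-variant. Type expressions are the least set of pseudo type expressions containing all type variables, closed under $\to$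 and $\bullet$, and containing $\mu X.A$ whenever it contains $A$ and $A$ is proper in $X$. Equality: $\cong$ is the least relation on type expressions such that: $A\cong A$; $A\cong B$ implies $B\cong A$; $A\cong B$ and $B\cong C$ imply $A\cong C$; $A\cong B$ implies $\bullet A\cong\bullet B$; $A\cong C$ and $B\cong D$ imply $A\to B\cong C\to D$; $A\to\top\cong\top$; $\mu X.A\cong A[\mu X.A/X]$; and if $A\cong C[A/X]$ with $C$ proper in $X$, then $A\cong\mu X.C$. $\simeq$ is the least relation satisfying the same closure conditions and additionally $\bullet(A\to B)\simeq\bullet A\to\bullet B$. *)

theory Defs
  imports Main
begin

text \<open>Pseudo type expressions in de Bruijn representation: alpha-convertible
  expressions are identified by construction.  TVar i is a bound variable if
  i is smaller than the number of enclosing Mu binders, otherwise a free type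
  variable (free variables form a countably infinite set).\<close>

datatype ty = TVar nat | Arr ty ty | Later ty | Mu ty

fun lift :: "nat \<Rightarrow> ty \<Rightarrow> ty" where
  "lift k (TVar i) = (if i < k then TVar i else TVar (Suc i))"
| "lift k (Arr A B) = Arr (lift k A) (lift k B)"
| "lift k (Later A) = Later (lift k A)"
| "lift k (Mu A) = Mu (lift (Suc k) A)"

fun subst :: "nat \<Rightarrow> ty \<Rightarrow> ty \<Rightarrow> ty" where
  "subst k (TVar i) s = (if i < k then TVar i else if i = k then s else TVar (i - 1))"
| "subst k (Arr A B) s = Arr (subst k A s) (subst k B s)"
| "subst k (Later A) s = Later (subst k A s)"
| "subst k (Mu A) s = Mu (subst (Suc k) A (lift 0 s))"

definition top :: ty where "top = Mu (Later (TVar 0))"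

fun tail :: "ty \<Rightarrow> ty" where
  "tail (TVar i) = TVar i"
| "tail (Arr A B) = tail B"
| "tail (Later A) = Later (tail A)"
| "tail (Mu A) = Mu (tail A)"

text \<open>On a tail bullet^m0 mu X1. bullet^m1 ... mu Xn. bullet^mn Y:
  the list ms records, for each enclosing binder (innermost first), the number
  of bullets between that binder and the current position.  Y = X_i with X_i
  the innermost binder of that name corresponds to the de Bruijn index of Y
  pointing to that binder, and m_i + ... + m_n is the recorded count.\<close>
fun tv :: "nat list \<Rightarrow> ty \<Rightarrow> bool" where
  "tv ms (TVar j) = (j < length ms \<and> ms ! j \<ge> 1)"
| "tv ms (Later A) = tv (map Suc ms) A"
| "tv ms (Mu A) = tv (0 # ms) A"
| "tv ms (Arr A B) = False"

definition top_variant :: "ty \<Rightarrow> bool" where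
  "top_variant A = tv [] (tail A)"

fun proper :: "nat \<Rightarrow> ty \<Rightarrow> bool" where
  "proper i (TVar j) = (j \<noteq> i)"
| "proper i (Later A) = True"
| "proper i (Arr A B) = ((proper i A \<and> proper i B) \<or> top_variant B)"
| "proper i (Mu A) = (proper (Suc i) A \<or> top_variant (Mu A))"

text \<open>Type expressions.\<close>
inductive wfty :: "ty \<Rightarrow> bool" where
  "wfty (TVar i)"
| "wfty A \<Longrightarrow> wfty B \<Longrightarrow> wfty (Arr A B)"
| "wfty A \<Longrightarrow> wfty (Later A)"
| "wfty A \<Longrightarrow> proper 0 A \<Longrightarrow> wfty (Mu A)"

text \<open>Equality relations; dist = False gives \<cong>, dist = True gives \<simeq>.
  subst 0 A (Mu A) is A[mu X.A/X];  subst 0 C A is C[A/X] for mu X.C = Mu C.\<close>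
inductive teq :: "bool \<Rightarrow> ty \<Rightarrow> ty \<Rightarrow> bool" for dist :: bool where
  refl: "wfty A \<Longrightarrow> teq dist A A"
| sym: "teq dist A B \<Longrightarrow> teq dist B A"
| trans: "teq dist A B \<Longrightarrow> teq dist B C \<Longrightarrow> teq dist A C"
| later: "teq dist A B \<Longrightarrow> teq dist (Later A) (Later B)"
| arr: "teq dist A C \<Longrightarrow> teq dist B D \<Longrightarrow> teq dist (Arr A B) (Arr C D)"
| arr_top: "wfty A \<Longrightarrow> teq dist (Arr A top) top"
| unfold: "wfty (Mu A) \<Longrightarrow> teq dist (Mu A) (subst 0 A (Mu A))"
| fold: "teq dist A (subst 0 C A) \<Longrightarrow> wfty (Mu C) \<Longrightarrow> teq dist A (Mu C)"
| distr: "dist \<Longrightarrow> wfty A \<Longrightarrow> wfty B \<Longrightarrow>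
          teq dist (Later (Arr A B)) (Arr (Later A) (Later B))"

definition tcong :: "ty \<Rightarrow> ty \<Rightarrow> bool" where "tcong = teq False"
definition tsimeq :: "ty \<Rightarrow> ty \<Rightarrow> bool" where "tsimeq = teq True"

end

theory Submission
  imports Defs
begin


fun psubst :: "(nat \<Rightarrow> ty) \<Rightarrow> ty \<Rightarrow> ty" where
  "psubst \<sigma> (TVar i) = \<sigma> i"
| "psubst \<sigma> (Arr A B) = Arr (psubst \<sigma> A) (psubst \<sigma> B)"
| "psubst \<sigma> (Later A) = Later (psubst \<sigma> A)"
| "psubst \<sigma> (Mu A) = Mu (psubst (\<lambda>j. case j of 0 \<Rightarrow> TVar 0 | Suc i \<Rightarrow> lift 0 (\<sigma> i)) A)"

definition up :: "(nat \<Rightarrow> ty) \<Rightarrow> nat \<Rightarrow> ty" where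
  "up \<sigma> = (\<lambda>j. case j of 0 \<Rightarrow> TVar 0 | Suc i \<Rightarrow> lift 0 (\<sigma> i))"

lemma psubst_Mu: "psubst \<sigma> (Mu A) = Mu (psubst (up \<sigma>) A)"
  by (simp add: up_def)

declare psubst.simps(4)[simp del]
lemmas psubst_simps[simp] = psubst_Mu

lemma up_0[simp]: "up \<sigma> 0 = TVar 0" and up_Suc[simp]: "up \<sigma> (Suc i) = lift 0 (\<sigma> i)"
  by (simp_all add: up_def)

definition ren :: "nat \<Rightarrow> nat \<Rightarrow> ty" where
  "ren k i = TVar (if i < k then i else Suc i)"

lemma up_ren: "up (ren k) = ren (Suc k)"
  by (rule ext) (auto simp: up_def ren_def split: nat.splits)

lemma lift_ps: "lift k A = psubst (ren k) A"
  by (induction A arbitrary: k) (auto simp: ren_def up_ren)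

definition sb :: "nat \<Rightarrow> ty \<Rightarrow> nat \<Rightarrow> ty" where
  "sb k s i = (if i < k then TVar i else if i = k then s else TVar (i - 1))"

lemma up_sb: "up (sb k s) = sb (Suc k) (lift 0 s)"
  by (rule ext) (auto simp: up_def sb_def lift_ps ren_def split: nat.splits)

lemma subst_ps: "subst k A s = psubst (sb k s) A"
  by (induction A arbitrary: k s) (auto simp: sb_def up_sb)

lemma ps_cong: "(\<And>i. \<sigma> i = \<tau> i) \<Longrightarrow> psubst \<sigma> A = psubst \<tau> A"
  by (metis ext)

lemma lift0: "lift 0 A = psubst (\<lambda>i. TVar (Suc i)) A"
  unfolding lift_ps by (rule ps_cong) (simp add: ren_def)

lemma up_ren_comp: "up (\<lambda>i. TVar (r i)) = (\<lambda>j. TVar (case j of 0 \<Rightarrow> 0 | Suc i \<Rightarrow> Suc (r i)))"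
  by (rule ext) (auto simp: up_def lift0 split: nat.splits)

lemma ps_ren_ps: "psubst \<sigma> (psubst (\<lambda>i. TVar (r i)) A) = psubst (\<lambda>i. \<sigma> (r i)) A"
proof (induction A arbitrary: \<sigma> r)
  case (Mu A)
  have "up \<sigma> (case j of 0 \<Rightarrow> 0 | Suc i \<Rightarrow> Suc (r i)) = up (\<lambda>i. \<sigma> (r i)) j" for j
    by (cases j) auto
  then show ?case using Mu by (simp add: up_ren_comp)
qed auto

lemma ren_ps_ps: "psubst (\<lambda>i. TVar (r i)) (psubst \<sigma> A) = psubst (\<lambda>i. psubst (\<lambda>i. TVar (r i)) (\<sigma> i)) A"
proof (induction A arbitrary: \<sigma> r)
  case (Mu A)
  have "psubst (\<lambda>j. TVar (case j of 0 \<Rightarrow> 0 | Suc i \<Rightarrow> Suc (r i))) (up \<sigma> j) =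
        up (\<lambda>i. psubst (\<lambda>i. TVar (r i)) (\<sigma> i)) j" for j
    by (cases j) (auto simp: lift0 ps_ren_ps)
  then show ?case using Mu by (simp add: up_ren_comp)
qed auto

lemma ps_ps: "psubst \<sigma> (psubst \<tau> A) = psubst (\<lambda>i. psubst \<sigma> (\<tau> i)) A"
proof (induction A arbitrary: \<sigma> \<tau>)
  case (Mu A)
  have "psubst (up \<sigma>) (up \<tau> j) = up (\<lambda>i. psubst \<sigma> (\<tau> i)) j" for j
    by (cases j) (auto simp: lift0 ps_ren_ps ren_ps_ps)
  then show ?case using Mu by simp
qed auto

lemma ps_id: "psubst TVar A = A"
proof -
  have "up TVar = TVar" by (rule ext) (auto simp: up_def split: nat.splits)
  then show ?thesis by (induction A) auto
qed


datatype pend = Bnd bool | Fr nat nat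

fun pe :: "ty \<Rightarrow> pend" where
  "pe (TVar i) = Fr i 0"
| "pe (Later A) = (case pe A of Fr i c \<Rightarrow> Fr i (Suc c) | b \<Rightarrow> b)"
| "pe (Mu A) = (case pe A of Fr 0 c \<Rightarrow> Bnd (1 \<le> c) | Fr (Suc i) c \<Rightarrow> Fr i c | b \<Rightarrow> b)"
| "pe (Arr A B) = pe B"

lemma tv_pe: "tv ms (tail Y) \<longleftrightarrow> (pe Y = Bnd True \<or> (\<exists>i c. pe Y = Fr i c \<and> i < length ms \<and> 1 \<le> ms!i + c))"
proof (induction Y arbitrary: ms)
  case (Later Y)
  then show ?case by (auto split: pend.splits)
next
  case (Mu Y)
  then show ?case by (auto split: pend.splits nat.splits simp: nth_Cons')
qed auto

lemma top_variant_pe: "top_variant Y \<longleftrightarrow> pe Y = Bnd True"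
  unfolding top_variant_def by (simp add: tv_pe)

fun addc :: "nat \<Rightarrow> pend \<Rightarrow> pend" where
  "addc c (Fr j c') = Fr j (c + c')"
| "addc c (Bnd b) = Bnd b"

lemma pe_ren: "pe (psubst (\<lambda>i. TVar (r i)) X) = (case pe X of Fr i c \<Rightarrow> Fr (r i) c | b \<Rightarrow> b)"
proof (induction X arbitrary: r)
  case (Later X)
  then show ?case by (auto split: pend.splits)
next
  case (Mu X)
  then show ?case by (auto simp: up_ren_comp split: pend.splits nat.splits)
qed auto

lemma pe_lift0: "pe (lift 0 X) = (case pe X of Fr i c \<Rightarrow> Fr (Suc i) c | b \<Rightarrow> b)"
  by (simp add: lift0 pe_ren)

lemma pe_ps: "pe (psubst \<sigma> X) = (case pe X of Fr i c \<Rightarrow> addc c (pe (\<sigma> i)) | b \<Rightarrow> b)"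
proof (induction X arbitrary: \<sigma>)
  case (TVar x)
  then show ?case by (cases "pe (\<sigma> x)") auto
next
  case (Later X)
  then show ?case by (cases "pe X"; cases "pe (\<sigma> (case pe X of Fr i c \<Rightarrow> i))") (auto split: pend.splits)
next
  case (Mu X)
  show ?case 
    apply (simp add: Mu)
    apply (auto split: pend.splits nat.splits simp: pe_lift0)
    done
qed auto

lemma tv_ps: "top_variant X \<Longrightarrow> top_variant (psubst \<sigma> X)"
  by (simp add: top_variant_pe pe_ps)

lemma tv_lift: "top_variant X \<Longrightarrow> top_variant (lift k X)"
  by (simp add: lift_ps tv_ps)

lemma proper_lift: "proper i X \<Longrightarrow> proper (if i < k then i else Suc i) (lift k X)"
proof (induction X arbitrary: i k)
  case (Arr X1 X2)
  show ?case
  proof (cases "top_variant X2")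
    case True then show ?thesis using tv_lift by auto
  next
    case False then show ?thesis using Arr.IH[of i k] Arr.prems by auto
  qed
next
  case (Mu X)
  have "top_variant (Mu X) \<Longrightarrow> top_variant (Mu (lift (Suc k) X))"
    using tv_lift[of "Mu X" k] by simp
  moreover have "proper (Suc i) X \<Longrightarrow> proper (if Suc i < Suc k then Suc i else Suc (Suc i)) (lift (Suc k) X)"
    using Mu.IH by blast
  ultimately show ?case using Mu.prems by (auto split: if_splits)
qed auto

lemma proper_lift_same: "proper k (lift k X)"
  by (induction X arbitrary: k) auto

lemma wfty_lift: "wfty X \<Longrightarrow> wfty (lift k X)"
proof (induction X arbitrary: k rule: wfty.induct)
  case (4 A)
  then show ?case using proper_lift[of 0 A "Suc k"] by (auto intro: wfty.intros)
qed (auto intro: wfty.intros)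

lemma proper_ps: "proper i X \<Longrightarrow> \<sigma> i = TVar i' \<Longrightarrow> (\<And>j. j \<noteq> i \<Longrightarrow> proper i' (\<sigma> j)) \<Longrightarrow> proper i' (psubst \<sigma> X)"
proof (induction X arbitrary: i i' \<sigma>)
  case (TVar x)
  then show ?case by (cases "x = i") auto
next
  case (Arr X1 X2)
  then show ?case using tv_ps by auto
next
  case (Mu X)
  show ?case
  proof (cases "proper (Suc i) X")
    case True
    have "proper (Suc i') (up \<sigma> j)" if "j \<noteq> Suc i" for j
      using that Mu.prems proper_lift[of i' "\<sigma> (j - 1)" 0] by (cases j) auto
    then have "proper (Suc i') (psubst (up \<sigma>) X)"
      using Mu.IH[OF True, of "up \<sigma>" "Suc i'"] Mu.prems by auto
    then show ?thesis by simp
  next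
    case False
    then have "top_variant (Mu X)" using Mu.prems by simp
    then have "top_variant (psubst \<sigma> (Mu X))" by (rule tv_ps)
    then show ?thesis by simp
  qed
qed auto

lemma wfty_ps: "wfty X \<Longrightarrow> (\<And>i. wfty (\<sigma> i)) \<Longrightarrow> wfty (psubst \<sigma> X)"
proof (induction X arbitrary: \<sigma> rule: wfty.induct)
  case (4 A)
  have w: "wfty (up \<sigma> j)" for j using 4 by (cases j) (auto intro: wfty.intros wfty_lift)
  have pj: "proper 0 (up \<sigma> j)" if "j \<noteq> 0" for j
    using that proper_lift_same[of 0] by (cases j) auto
  have "proper 0 (psubst (up \<sigma>) A)"
    by (rule proper_ps[OF 4(2)]) (auto intro: pj)
  then show ?case using 4 w by (auto intro: wfty.intros)
qed (auto intro: wfty.intros)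

lemma wfty_subst: "wfty X \<Longrightarrow> wfty s \<Longrightarrow> wfty (subst k X s)"
  unfolding subst_ps by (rule wfty_ps) (auto simp: sb_def intro: wfty.intros)

lemma wfty_top[simp]: "wfty top"
  unfolding top_def by (auto intro!: wfty.intros)

lemma teq_wfty: "teq d X Y \<Longrightarrow> wfty X \<and> wfty Y"
proof (induction rule: teq.induct)
  case (unfold A)
  then show ?case by (auto intro: wfty_subst elim: wfty.cases)
qed (auto intro: wfty.intros)



lemma subst_lift0: "psubst (sb 0 s) (lift 0 X) = X"
  by (simp add: lift0 ps_ren_ps sb_def ps_id)

lemma ps_unf: "psubst \<sigma> (subst 0 A B) = subst 0 (psubst (up \<sigma>) A) (psubst \<sigma> B)"
  unfolding subst_ps ps_ps
proof (rule ps_cong)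
  fix i show "psubst \<sigma> (sb 0 B i) = psubst (sb 0 (psubst \<sigma> B)) (up \<sigma> i)"
    by (cases i) (auto simp: sb_def subst_lift0)
qed

lemma wfty_ps_mu: "wfty (Mu A) \<Longrightarrow> (\<And>i. wfty (\<sigma> i)) \<Longrightarrow> wfty (Mu (psubst (up \<sigma>) A))"
  using wfty_ps[of "Mu A" \<sigma>] by simp

lemma ps_top[simp]: "psubst \<sigma> top = top"
  by (simp add: top_def)

lemma teq_ps: "teq d X Y \<Longrightarrow> (\<And>i. wfty (\<sigma> i)) \<Longrightarrow> teq d (psubst \<sigma> X) (psubst \<sigma> Y)"
proof (induction arbitrary: \<sigma> rule: teq.induct)
  case (refl A)
  then show ?case by (auto intro: teq.refl wfty_ps)
next
  case (sym A B)
  then show ?case by (auto intro: teq.sym)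
next
  case (trans A B C)
  then show ?case by (auto intro: teq.trans)
next
  case (later A B)
  then show ?case by (auto intro: teq.later)
next
  case (arr A C B D)
  then show ?case by (auto intro: teq.arr)
next
  case (arr_top A)
  then show ?case by (auto intro: teq.arr_top wfty_ps)
next
  case (unfold A)
  have "wfty (Mu (psubst (up \<sigma>) A))" using unfold by (auto intro: wfty_ps_mu)
  then show ?case by (simp add: ps_unf teq.unfold)
next
  case (fold A C)
  have "wfty (psubst \<sigma> (Mu C))" using fold by (auto intro: wfty_ps_mu)
  moreover have "teq d (psubst \<sigma> A) (subst 0 (psubst (up \<sigma>) C) (psubst \<sigma> A))"
    using fold ps_unf by metis
  ultimately show ?case by (auto intro: teq.fold)
next
  case (distr A B)
  then show ?case by (auto intro: teq.distr wfty_ps)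
qed

lemma teq_lift: "teq d X Y \<Longrightarrow> teq d (lift k X) (lift k Y)"
  unfolding lift_ps by (rule teq_ps) (auto simp: ren_def intro: wfty.intros)

lemma teq_subst: "teq d X Y \<Longrightarrow> wfty s \<Longrightarrow> teq d (subst k X s) (subst k Y s)"
  unfolding subst_ps by (rule teq_ps) (auto simp: sb_def intro: wfty.intros)

lemma teq_refl: "wfty A \<Longrightarrow> teq d A A" by (rule teq.refl)

lemma teq_mu_cong: "teq d B B' \<Longrightarrow> wfty (Mu B) \<Longrightarrow> wfty (Mu B') \<Longrightarrow> teq d (Mu B) (Mu B')"
proof -
  assume a: "teq d B B'" "wfty (Mu B)" "wfty (Mu B')"
  have "teq d (Mu B) (subst 0 B (Mu B))" by (rule teq.unfold[OF a(2)])
  moreover have "teq d (subst 0 B (Mu B)) (subst 0 B' (Mu B))" using a by (auto intro: teq_subst)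
  ultimately have "teq d (Mu B) (subst 0 B' (Mu B))" by (rule teq.trans)
  then show ?thesis using a by (auto intro: teq.fold)
qed

lemma teq_cong: "wfty X \<Longrightarrow> (\<And>i. teq d (\<sigma> i) (\<sigma>' i)) \<Longrightarrow> teq d (psubst \<sigma> X) (psubst \<sigma>' X)"
proof (induction X arbitrary: \<sigma> \<sigma>' rule: wfty.induct)
  case (1 i)
  then show ?case by simp
next
  case (2 A B)
  then show ?case by (auto intro: teq.arr)
next
  case (3 A)
  then show ?case by (auto intro: teq.later)
next
  case (4 A)
  have w: "wfty (\<sigma> i)" "wfty (\<sigma>' i)" for i using 4 teq_wfty by blast+
  have "teq d (up \<sigma> j) (up \<sigma>' j)" for j
    using 4 by (cases j) (auto intro: teq_lift teq.refl wfty.intros)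
  then have "teq d (psubst (up \<sigma>) A) (psubst (up \<sigma>') A)" using 4 by blast
  moreover have "wfty (psubst \<sigma> (Mu A))" "wfty (psubst \<sigma>' (Mu A))"
    using 4 w by (auto intro: wfty_ps_mu wfty.intros)
  ultimately show ?case by (auto intro: teq_mu_cong)
qed



datatype head = HVar nat nat | HArr nat ty ty

fun hlater :: "nat \<Rightarrow> head \<Rightarrow> head" where
  "hlater k (HVar n i) = HVar (n + k) i"
| "hlater k (HArr n P Q) = HArr (n + k) P Q"

lemma hlater_0[simp]: "hlater 0 h = h" by (cases h) auto
lemma hlater_hlater[simp]: "hlater a (hlater b h) = hlater (b + a) h" by (cases h) auto
lemma hlater_eq[simp]: "hlater k h = h \<longleftrightarrow> k = 0" by (cases h) auto
lemma hlater_eq2[simp]: "h = hlater k h \<longleftrightarrow> k = 0" by (cases h) auto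

inductive hdf :: "ty \<Rightarrow> head \<Rightarrow> bool" where
  hv: "hdf (TVar i) (HVar 0 i)"
| ha: "hdf (Arr A B) (HArr 0 A B)"
| hl: "hdf A h \<Longrightarrow> hdf (Later A) (hlater (Suc 0) h)"
| hm: "hdf (subst 0 A (Mu A)) h \<Longrightarrow> hdf (Mu A) h"

inductive_cases hdTV: "hdf (TVar i) h"
inductive_cases hdArr: "hdf (Arr A B) h"
inductive_cases hdL: "hdf (Later A) h"
inductive_cases hdM: "hdf (Mu A) h"

lemma hd_TVar[simp]: "hdf (TVar i) h \<longleftrightarrow> h = HVar 0 i" by (metis hdTV hdf.hv)
lemma hd_Arr[simp]: "hdf (Arr A B) h \<longleftrightarrow> h = HArr 0 A B" by (metis hdArr hdf.ha)
lemma hd_Later: "hdf (Later A) h \<longleftrightarrow> (\<exists>h0. hdf A h0 \<and> h = hlater (Suc 0) h0)" by (metis hdL hdf.hl)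
lemma hd_Mu: "hdf (Mu A) h \<longleftrightarrow> hdf (subst 0 A (Mu A)) h" by (metis hdM hdf.hm)

lemma hd_det: "hdf X h1 \<Longrightarrow> hdf X h2 \<Longrightarrow> h1 = h2"
proof (induction arbitrary: h2 rule: hdf.induct)
  case (hl A h)
  from hl.prems obtain h0 where "hdf A h0" "h2 = hlater (Suc 0) h0" by (rule hdL)
  then show ?case using hl.IH by simp
next
  case (hm A h)
  from hm.prems have "hdf (subst 0 A (Mu A)) h2" by (rule hdM)
  then show ?case by (rule hm.IH)
qed auto

lemma hd_mu_ps: "hdf (psubst \<sigma> (subst 0 A (Mu A))) h \<Longrightarrow> hdf (Mu (psubst (up \<sigma>) A)) h"
proof -
  assume "hdf (psubst \<sigma> (subst 0 A (Mu A))) h"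
  then have "hdf (subst 0 (psubst (up \<sigma>) A) (Mu (psubst (up \<sigma>) A))) h"
    by (simp only: ps_unf psubst_Mu)
  then show ?thesis by (rule hdf.hm)
qed

lemma hd_fwd: "hdf C h \<Longrightarrow> (case h of HArr n P Q \<Rightarrow> hdf (psubst \<sigma> C) (HArr n (psubst \<sigma> P) (psubst \<sigma> Q))
   | HVar n i \<Rightarrow> (\<forall>h'. hdf (\<sigma> i) h' \<longrightarrow> hdf (psubst \<sigma> C) (hlater n h')))"
proof (induction arbitrary: \<sigma> rule: hdf.induct)
  case (hv i)
  then show ?case by simp
next
  case (ha A B)
  then show ?case by simp
next
  case (hl A h)
  show ?case
  proof (cases h)
    case (HVar n i)
    then show ?thesis using hl.IH[of \<sigma>] by (auto intro!: hdf.hl[of _ "hlater n _", simplified])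
  next
    case (HArr n P Q)
    then show ?thesis using hl.IH[of \<sigma>] hdf.hl by fastforce
  qed
next
  case (hm A h)
  then show ?case using hm.IH[of \<sigma>] by (cases h) (auto intro: hd_mu_ps)
qed

lemma hd_fwd_arr: "hdf C (HArr n P Q) \<Longrightarrow> hdf (psubst \<sigma> C) (HArr n (psubst \<sigma> P) (psubst \<sigma> Q))"
  using hd_fwd[of C "HArr n P Q" \<sigma>] by simp

lemma hd_fwd_var: "hdf C (HVar n i) \<Longrightarrow> hdf (\<sigma> i) h' \<Longrightarrow> hdf (psubst \<sigma> C) (hlater n h')"
  using hd_fwd[of C "HVar n i" \<sigma>] by simp

lemma hd_inv: "hdf X h \<Longrightarrow> X = psubst \<sigma> C \<Longrightarrow>
   (\<exists>n P Q. hdf C (HArr n P Q) \<and> h = HArr n (psubst \<sigma> P) (psubst \<sigma> Q)) \<or>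
   (\<exists>n i h'. hdf C (HVar n i) \<and> hdf (\<sigma> i) h' \<and> h = hlater n h')"
proof (induction arbitrary: C rule: hdf.induct)
  case (hv i)
  then show ?case by (cases C) (auto, metis hdf.hv)
next
  case (ha A B)
  then show ?case by (cases C) (auto, metis hdf.ha)
next
  case (hl A h)
  show ?case
  proof (cases C)
    case (TVar j)
    then show ?thesis using hl hdf.hl[OF hl.hyps] by auto
  next
    case (Later C')
    then have "A = psubst \<sigma> C'" using hl by simp
    from hl.IH[OF this] show ?thesis
    proof
      assume "\<exists>n P Q. hdf C' (HArr n P Q) \<and> h = HArr n (psubst \<sigma> P) (psubst \<sigma> Q)"
      then obtain n P Q where "hdf C' (HArr n P Q)" "h = HArr n (psubst \<sigma> P) (psubst \<sigma> Q)" by blast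
      then show ?thesis using Later hdf.hl[of C' "HArr n P Q"] by auto
    next
      assume "\<exists>n i h'. hdf C' (HVar n i) \<and> hdf (\<sigma> i) h' \<and> h = hlater n h'"
      then obtain n i h' where "hdf C' (HVar n i)" "hdf (\<sigma> i) h'" "h = hlater n h'" by blast
      then show ?thesis using Later hdf.hl[of C' "HVar n i"]
        by (intro disjI2 exI[of _ "Suc n"] exI[of _ i] exI[of _ h']) auto
    qed
  qed (use hl.prems in simp_all)
next
  case (hm A h)
  show ?case
  proof (cases C)
    case (TVar j)
    then show ?thesis using hm.prems hdf.hm[OF hm.hyps] by auto
  next
    case (Mu C')
    then have "subst 0 A (Mu A) = psubst \<sigma> (subst 0 C' (Mu C'))" using hm by (simp add: ps_unf)
    from hm.IH[OF this] show ?thesis using Mu hdf.hm[of C'] by blast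
  qed (use hm.prems in simp_all)
qed

lemma PV: "wfty C \<Longrightarrow> hdf C (HVar j m) \<Longrightarrow> pe C = Fr m j \<and> (j = 0 \<longrightarrow> \<not> proper m C)"
proof (induction C arbitrary: j m)
  case (TVar x)
  then show ?case by simp
next
  case (Arr C1 C2)
  then show ?case by simp
next
  case (Later C)
  then obtain h0 where "hdf C h0" "HVar j m = hlater 1 h0" by (auto simp: hd_Later)
  moreover then obtain j' where "h0 = HVar j' m" "j = Suc j'" by (cases h0) auto
  moreover have "wfty C" using Later.prems by (auto elim: wfty.cases)
  ultimately show ?case using Later.IH by auto
next
  case (Mu C)
  have wC: "wfty C" "proper 0 C" using Mu.prems by (auto elim: wfty.cases)
  have "hdf (psubst (sb 0 (Mu C)) C) (HVar j m)" using Mu.prems by (simp add: hd_Mu subst_ps)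
  from hd_inv[where \<sigma>="sb 0 (Mu C)" and C=C, OF this HOL.refl] obtain n i h' where
    hC: "hdf C (HVar n i)" and h': "hdf (sb 0 (Mu C) i) h'" and e: "HVar j m = hlater n h'" by auto
  show ?case
  proof (cases i)
    case 0
    with Mu.IH[OF wC(1) hC] wC have "n \<noteq> 0" by auto
    moreover from 0 h' have "hdf (Mu C) h'" by (simp add: sb_def)
    with Mu.prems have "h' = HVar j m" using hd_det by blast
    ultimately have "hlater n h' = h'" using e by simp
    with \<open>n \<noteq> 0\<close> show ?thesis by simp
  next
    case (Suc i')
    with h' have "h' = HVar 0 i'" by (simp add: sb_def)
    with e have "j = n" "m = i'" by auto
    with Mu.IH[OF wC(1) hC] Suc have "pe C = Fr (Suc m) j" "j = 0 \<longrightarrow> \<not> proper (Suc m) C" by auto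
    then have p: "pe (Mu C) = Fr m j" by simp
    then have "\<not> top_variant (Mu C)" by (simp add: top_variant_pe)
    with p \<open>j = 0 \<longrightarrow> \<not> proper (Suc m) C\<close> show ?thesis by (simp del: pe.simps)
  qed
qed



abbreviation L :: "nat \<Rightarrow> ty \<Rightarrow> ty" where "L n X \<equiv> (Later ^^ n) X"

lemma wfty_L: "wfty X \<Longrightarrow> wfty (L n X)"
  by (induction n) (auto intro: wfty.intros)

lemma teq_L: "teq d X Y \<Longrightarrow> teq d (L n X) (L n Y)"
  by (induction n) (auto intro: teq.later)

lemma later_top: "teq d (Later top) top"
proof -
  have "teq d top (subst 0 (Later (TVar 0)) top)"
    using teq.unfold[of "Later (TVar 0)" d] wfty_top by (simp add: top_def)
  then show ?thesis by (simp add: top_def teq.sym)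
qed

lemma L_top: "teq d (L n top) top"
proof (induction n)
  case 0 then show ?case by (simp add: teq.refl)
next
  case (Suc n)
  then have "teq d (Later (L n top)) (Later top)" by (rule teq.later)
  then show ?case using later_top by (auto intro: teq.trans)
qed

lemma subst_L: "subst 0 (L k (TVar 0)) X = L k X"
  by (induction k) auto

lemma fix_top: "teq d X (L k X) \<Longrightarrow> 1 \<le> k \<Longrightarrow> teq d X top"
proof -
  assume a: "teq d X (L k X)" "1 \<le> k"
  have w: "wfty (Mu (L k (TVar 0)))"
    using a(2) by (cases k) (auto intro!: wfty.intros wfty_L)
  have "teq d X (Mu (L k (TVar 0)))" using a w by (auto intro: teq.fold simp: subst_L)
  moreover have "teq d top (L k top)" using L_top teq.sym by blast
  then have "teq d top (Mu (L k (TVar 0)))" using w by (auto intro: teq.fold simp: subst_L)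
  ultimately show ?thesis by (blast intro: teq.trans teq.sym)
qed

fun compat :: "bool \<Rightarrow> head \<Rightarrow> head \<Rightarrow> bool" where
  "compat d (HVar n i) (HVar m j) = (n = m \<and> i = j)"
| "compat True (HArr n P Q) (HArr m R S) = ((teq True (L n P) (L m R) \<and> teq True (L n Q) (L m S))
      \<or> (teq True (L n Q) (L m S) \<and> teq True (L m S) top))"
| "compat False (HArr n P Q) (HArr m R S) = (if n = m then (teq False P R \<and> teq False Q S)
      \<or> (teq False Q S \<and> teq False S top) else teq False Q top \<and> teq False S top)"
| "compat d (HVar n i) (HArr m R S) = False"
| "compat d (HArr n P Q) (HVar m j) = False"

fun inff :: "bool \<Rightarrow> head \<Rightarrow> bool" where
  "inff d (HVar n i) = False"
| "inff True (HArr n P Q) = teq True (L n Q) top"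
| "inff False (HArr n P Q) = teq False Q top"

fun hrel :: "bool \<Rightarrow> head \<Rightarrow> head \<Rightarrow> bool" where
  "hrel d (HVar n i) (HVar m j) = (n = m \<and> i = j)"
| "hrel d (HArr n P Q) (HArr m R S) = (n = m \<and> teq d P R \<and> teq d Q S)"
| "hrel d _ _ = False"

fun hwf :: "head \<Rightarrow> bool" where
  "hwf (HVar n i) = True"
| "hwf (HArr n P Q) = (wfty P \<and> wfty Q)"

lemmas tt = teq.trans teq.sym

lemma compat_refl: "hwf h \<Longrightarrow> compat d h h"
  by (cases h; cases d) (auto intro: teq.refl wfty_L)

lemma compat_sym: "compat d h1 h2 \<Longrightarrow> compat d h2 h1"
  by (cases h1; cases h2; cases d) (auto split: if_splits intro: tt)

lemma compat_trans: "compat d h1 h2 \<Longrightarrow> compat d h2 h3 \<Longrightarrow> compat d h1 h3"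
proof (cases h1; cases h2; cases h3; cases d)
  fix n1 P Q n2 R S n3 T U
  assume e: "h1 = HArr n1 P Q" "h2 = HArr n2 R S" "h3 = HArr n3 T U"
  { assume "d" "compat d h1 h2" "compat d h2 h3"
    then show "compat d h1 h3" using e by simp (meson tt) }
  { assume "\<not>d" "compat d h1 h2" "compat d h2 h3"
    then show "compat d h1 h3" using e by (simp split: if_splits) (meson tt)+ }
qed auto

lemma compat_inf: "compat d h1 h2 \<Longrightarrow> inff d h2 \<Longrightarrow> inff d h1"
  by (cases h1; cases h2; cases d) (auto split: if_splits intro: tt)

lemma inf_inf: "inff d h1 \<Longrightarrow> inff d h2 \<Longrightarrow> compat d h1 h2"
  by (cases h1; cases h2; cases d) (auto split: if_splits intro: tt)

lemma teq_later_top: "teq d X top \<Longrightarrow> teq d (Later X) top"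
  using teq.later later_top teq.trans by blast

lemma compat_later: "compat d h1 h2 \<Longrightarrow> compat d (hlater (Suc 0) h1) (hlater (Suc 0) h2)"
  by (cases h1; cases h2; cases d) (auto intro: teq.later teq_later_top)

lemma inf_later: "inff d h \<Longrightarrow> inff d (hlater (Suc 0) h)"
  by (cases h; cases d) (auto intro: teq_later_top)

lemma later_inf: "compat d h (hlater k h) \<Longrightarrow> 1 \<le> k \<Longrightarrow> inff d h"
proof (cases h; cases d)
  fix n P Q assume e: "h = HArr n P Q" "d" "compat d h (hlater k h)" "1 \<le> k"
  then have "teq True (L n Q) (L (n + k) Q)" by auto
  moreover have "L (n + k) Q = L (k + n) Q" by (simp add: add.commute)
  moreover have "L (k + n) Q = L k (L n Q)" by (simp add: funpow_add)
  ultimately show "inff d h" using e fix_top by auto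
qed auto

lemma compat_cong: "compat d h1 h2 \<Longrightarrow> hrel d h2 h3 \<Longrightarrow> compat d h1 h3"
proof (cases h1; cases h2; cases h3; cases d)
  fix n1 P Q n2 R S n3 T U
  assume e: "h1 = HArr n1 P Q" "h2 = HArr n2 R S" "h3 = HArr n3 T U"
  { assume "d" "compat d h1 h2" "hrel d h2 h3"
    moreover then have "teq True (L n2 R) (L n2 T)" "teq True (L n2 S) (L n2 U)" using e by (auto intro: teq_L)
    ultimately show "compat d h1 h3" using e by simp (meson tt) }
  { assume "\<not>d" "compat d h1 h2" "hrel d h2 h3"
    then show "compat d h1 h3" using e by (simp split: if_splits) (meson tt)+ }
qed auto

lemma inf_cong: "inff d h2 \<Longrightarrow> hrel d h2 h3 \<Longrightarrow> inff d h3"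
proof (cases h2; cases h3; cases d)
  fix n2 R S n3 T U
  assume e: "h2 = HArr n2 R S" "h3 = HArr n3 T U" 
  { assume "d" "inff d h2" "hrel d h2 h3"
    moreover then have "teq True (L n2 S) (L n2 U)" using e by (auto intro: teq_L)
    ultimately show "inff d h3" using e by simp (meson tt) }
  { assume "\<not>d" "inff d h2" "hrel d h2 h3"
    then show "inff d h3" using e by simp (meson tt) }
qed auto



definition Inv :: "bool \<Rightarrow> ty \<Rightarrow> ty \<Rightarrow> bool" where
  "Inv d X Y \<longleftrightarrow> (\<forall>h1 h2. hdf X h1 \<longrightarrow> hdf Y h2 \<longrightarrow> compat d h1 h2) \<and>
     (\<forall>h1. hdf X h1 \<longrightarrow> (\<forall>h2. \<not> hdf Y h2) \<longrightarrow> inff d h1) \<and>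
     (\<forall>h2. hdf Y h2 \<longrightarrow> (\<forall>h1. \<not> hdf X h1) \<longrightarrow> inff d h2)"

lemma hd_wf: "hdf X h \<Longrightarrow> wfty X \<Longrightarrow> hwf h"
proof (induction rule: hdf.induct)
  case (ha A B) then show ?case by (auto elim: wfty.cases)
next
  case (hl A h) then show ?case by (cases h) (auto elim: wfty.cases)
next
  case (hm A h)
  then have "wfty (subst 0 A (Mu A))" using teq_wfty teq.unfold by blast
  then show ?case using hm.IH by blast
qed auto

lemma InvD1: "Inv d X Y \<Longrightarrow> hdf X h1 \<Longrightarrow> hdf Y h2 \<Longrightarrow> compat d h1 h2"
  unfolding Inv_def by blast
lemma InvD2: "Inv d X Y \<Longrightarrow> hdf X h1 \<Longrightarrow> (\<forall>h2. \<not> hdf Y h2) \<Longrightarrow> inff d h1"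
  unfolding Inv_def by blast
lemma InvD3: "Inv d X Y \<Longrightarrow> hdf Y h2 \<Longrightarrow> (\<forall>h1. \<not> hdf X h1) \<Longrightarrow> inff d h2"
  unfolding Inv_def by blast
lemma InvI: "(\<And>h1 h2. hdf X h1 \<Longrightarrow> hdf Y h2 \<Longrightarrow> compat d h1 h2) \<Longrightarrow>
  (\<And>h1. hdf X h1 \<Longrightarrow> (\<forall>h2. \<not> hdf Y h2) \<Longrightarrow> inff d h1) \<Longrightarrow>
  (\<And>h2. hdf Y h2 \<Longrightarrow> (\<forall>h1. \<not> hdf X h1) \<Longrightarrow> inff d h2) \<Longrightarrow> Inv d X Y"
  unfolding Inv_def by blast

lemma Inv_refl: "wfty X \<Longrightarrow> Inv d X X"
  by (rule InvI) (metis hd_det hd_wf compat_refl, blast+)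

lemma Inv_sym: "Inv d X Y \<Longrightarrow> Inv d Y X"
  by (rule InvI) (auto dest: InvD1 InvD2 InvD3 intro: compat_sym)

lemma Inv_trans: "Inv d X Y \<Longrightarrow> Inv d Y Z \<Longrightarrow> Inv d X Z"
proof (rule InvI)
  assume a: "Inv d X Y" "Inv d Y Z"
  { fix h1 h3 assume h: "hdf X h1" "hdf Z h3"
    show "compat d h1 h3"
    proof (cases "\<exists>h2. hdf Y h2")
      case True
      then obtain h2 where "hdf Y h2" by blast
      then show ?thesis using InvD1[OF a(1) h(1)] InvD1[OF a(2) _ h(2)] compat_trans by blast
    next
      case False
      then show ?thesis using InvD2[OF a(1) h(1)] InvD3[OF a(2) h(2)] inf_inf by blast
    qed }
  { fix h1 assume h: "hdf X h1" "\<forall>h3. \<not> hdf Z h3"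
    show "inff d h1"
    proof (cases "\<exists>h2. hdf Y h2")
      case True
      then obtain h2 where "hdf Y h2" by blast
      then show ?thesis using InvD1[OF a(1) h(1)] InvD2[OF a(2) _ h(2)] compat_inf by blast
    next
      case False
      then show ?thesis using InvD2[OF a(1) h(1)] by blast
    qed }
  { fix h3 assume h: "hdf Z h3" "\<forall>h1. \<not> hdf X h1"
    show "inff d h3"
    proof (cases "\<exists>h2. hdf Y h2")
      case True
      then obtain h2 where "hdf Y h2" by blast
      then show ?thesis using InvD1[OF a(2) _ h(1)] InvD3[OF a(1) _ h(2)] compat_inf compat_sym by blast
    next
      case False
      then show ?thesis using InvD3[OF a(2) h(1)] by blast
    qed }
qed

lemma no_hd_top: "\<not> hdf top h"
proof
  assume "hdf top h"
  then show False
  proof (induction "top" h rule: hdf.induct)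
    case (hm A h)
    then have "hdf (Later top) h" by (simp add: top_def)
    then obtain h0 where "hdf top h0" "h = hlater (Suc 0) h0" by (auto simp: hd_Later)
    then show False using hm hd_det[of top h h0] hdf.hm[OF hm.hyps(1)] by (auto simp: top_def)
  qed (auto simp: top_def)
qed

lemma sb_wf: "wfty s \<Longrightarrow> wfty (sb 0 s i)" by (auto simp: sb_def intro: wfty.intros)

theorem teq_Inv: "teq d X Y \<Longrightarrow> Inv d X Y"
proof (induction rule: teq.induct)
  case (refl A) then show ?case by (rule Inv_refl)
next
  case (sym A B) then show ?case by (blast intro: Inv_sym)
next
  case (trans A B C) then show ?case by (blast intro: Inv_trans)
next
  case (later A B)
  have nA: "(\<forall>h. \<not> hdf (Later A) h) \<longleftrightarrow> (\<forall>h. \<not> hdf A h)" 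
   and nB: "(\<forall>h. \<not> hdf (Later B) h) \<longleftrightarrow> (\<forall>h. \<not> hdf B h)" by (auto simp: hd_Later)
  show ?case unfolding Inv_def
  proof (intro conjI allI impI)
    fix h1 h2 assume "hdf (Later A) h1" "hdf (Later B) h2"
    then show "compat d h1 h2" using later.IH unfolding Inv_def hd_Later by (auto intro: compat_later)
  next
    fix h1 assume "hdf (Later A) h1" "\<forall>h2. \<not> hdf (Later B) h2"
    then show "inff d h1" using later.IH nB unfolding Inv_def hd_Later by (auto intro: inf_later)
  next
    fix h2 assume "hdf (Later B) h2" "\<forall>h1. \<not> hdf (Later A) h1"
    then show "inff d h2" using later.IH nA unfolding Inv_def hd_Later by (auto intro: inf_later)
  qed
next
  case (arr A C B D)
  have "compat d (HArr 0 A B) (HArr 0 C D)"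
  proof (cases d)
    case True then show ?thesis using arr.hyps by simp
  next
    case False then show ?thesis using arr.hyps by simp
  qed
  then show ?case unfolding Inv_def by simp
next
  case (arr_top A)
  have "inff d (HArr 0 A top)"
  proof (cases d)
    case True then show ?thesis by (simp add: teq.refl)
  next
    case False then show ?thesis by (simp add: teq.refl)
  qed
  then show ?case unfolding Inv_def using no_hd_top by simp
next
  case (unfold A)
  then have "wfty (subst 0 A (Mu A))" using teq.unfold teq_wfty by blast
  then have "Inv d (subst 0 A (Mu A)) (subst 0 A (Mu A))" by (rule Inv_refl)
  then show ?case unfolding Inv_def hd_Mu[of A] .
next
  case (fold A C)
  let ?M = "Mu C"
  have wC: "wfty C" "proper 0 C" using fold by (auto elim: wfty.cases)
  have tAM: "teq d A ?M" using fold by (auto intro: teq.fold)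
  have wA: "wfty A" "wfty ?M" using teq_wfty[OF tAM] by auto
  have IH: "Inv d A (psubst (sb 0 A) C)" using fold by (simp add: subst_ps)
  have hM: "hdf ?M h \<longleftrightarrow> hdf (psubst (sb 0 ?M) C) h" for h by (simp add: hd_Mu subst_ps)
  have cg: "teq d (psubst (sb 0 A) P) (psubst (sb 0 ?M) P)" if "wfty P" for P
    using that tAM by (intro teq_cong) (auto simp: sb_def intro: teq.refl wfty.intros)
  have headsM: "\<exists>h2a. hdf (psubst (sb 0 A) C) h2a \<and> hrel d h2a h2" if "hdf ?M h2" for h2
  proof -
    from that have "hdf (psubst (sb 0 ?M) C) h2" by (simp add: hM)
    from hd_inv[OF this HOL.refl] show ?thesis
    proof
      assume "\<exists>n P Q. hdf C (HArr n P Q) \<and> h2 = HArr n (psubst (sb 0 ?M) P) (psubst (sb 0 ?M) Q)"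
      then obtain n P Q where a: "hdf C (HArr n P Q)" "h2 = HArr n (psubst (sb 0 ?M) P) (psubst (sb 0 ?M) Q)"
        by blast
      have "wfty P" "wfty Q" using hd_wf[OF a(1) wC(1)] by auto
      then show ?thesis using a hd_fwd_arr[OF a(1), of "sb 0 A"] cg by auto
    next
      assume "\<exists>n i h'. hdf C (HVar n i) \<and> hdf (sb 0 ?M i) h' \<and> h2 = hlater n h'"
      then obtain n i h' where a: "hdf C (HVar n i)" "hdf (sb 0 ?M i) h'" "h2 = hlater n h'" by blast
      show ?thesis
      proof (cases i)
        case 0
        with PV[OF wC(1) a(1)] wC have "n \<noteq> 0" by auto
        moreover have "hdf ?M h'" using a 0 by (simp add: sb_def)
        then have "h' = h2" using that hd_det by blast
        ultimately show ?thesis using a by simp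
      next
        case (Suc i')
        then have "h' = HVar 0 i'" using a by (simp add: sb_def)
        moreover have "hdf (sb 0 A i) (HVar 0 i')" using Suc by (simp add: sb_def)
        ultimately show ?thesis using a hd_fwd_var[OF a(1)] by fastforce
      qed
    qed
  qed
  have noM: "\<exists>n h1'. 1 \<le> n \<and> hdf A h1' \<and> h3 = hlater n h1'"
    if "\<forall>h2. \<not> hdf ?M h2" "hdf (psubst (sb 0 A) C) h3" for h3
  proof -
    from hd_inv[OF that(2) HOL.refl] show ?thesis
    proof
      assume "\<exists>n P Q. hdf C (HArr n P Q) \<and> h3 = HArr n (psubst (sb 0 A) P) (psubst (sb 0 A) Q)"
      then obtain n P Q where a: "hdf C (HArr n P Q)" by blast
      then show ?thesis using hd_fwd_arr[OF a, of "sb 0 ?M"] that(1) hM by blast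
    next
      assume "\<exists>n i h'. hdf C (HVar n i) \<and> hdf (sb 0 A i) h' \<and> h3 = hlater n h'"
      then obtain n i h' where a: "hdf C (HVar n i)" "hdf (sb 0 A i) h'" "h3 = hlater n h'" by blast
      show ?thesis
      proof (cases i)
        case 0
        with PV[OF wC(1) a(1)] wC have "n \<noteq> 0" by auto
        moreover have "hdf A h'" using a 0 by (simp add: sb_def)
        ultimately show ?thesis using a(3) by (intro exI[of _ n] exI[of _ h']) auto
      next
        case (Suc i')
        have "hdf (sb 0 ?M i) (HVar 0 i')" using Suc by (simp add: sb_def)
        then show ?thesis using hd_fwd_var[OF a(1)] that(1) hM by blast
      qed
    qed
  qed
  show ?case unfolding Inv_def
  proof (intro conjI allI impI)
    fix h1 h2 assume "hdf A h1" "hdf ?M h2"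
    then obtain h2a where "hdf (psubst (sb 0 A) C) h2a" "hrel d h2a h2" using headsM by blast
    then show "compat d h1 h2" using IH \<open>hdf A h1\<close> compat_cong unfolding Inv_def by blast
  next
    fix h1 assume h1: "hdf A h1" and nM: "\<forall>h2. \<not> hdf ?M h2"
    show "inff d h1"
    proof (cases "\<exists>h3. hdf (psubst (sb 0 A) C) h3")
      case True
      then obtain h3 where h3: "hdf (psubst (sb 0 A) C) h3" by blast
      from noM[OF nM h3] obtain n h1' where "1 \<le> n" "hdf A h1'" "h3 = hlater n h1'" by blast
      moreover then have "h1' = h1" using h1 hd_det by blast
      ultimately show ?thesis using IH h1 h3 later_inf unfolding Inv_def by blast
    next
      case False
      then show ?thesis using IH h1 unfolding Inv_def by blast
    qed
  next
    fix h2 assume h2: "hdf ?M h2" and nA: "\<forall>h1. \<not> hdf A h1"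
    then obtain h2a where "hdf (psubst (sb 0 A) C) h2a" "hrel d h2a h2" using headsM by blast
    then show "inff d h2" using IH nA inf_cong unfolding Inv_def by blast
  qed
next
  case (distr A B)
  have f1: "hdf (Later (Arr A B)) (HArr 1 A B)" using hdf.hl[OF hdf.ha[of A B]] by simp
  have f2: "hdf (Arr (Later A) (Later B)) (HArr 0 (Later A) (Later B))" by simp
  have cp: "compat d (HArr 1 A B) (HArr 0 (Later A) (Later B))"
    using distr by (auto intro: teq.refl wfty.intros)
  show ?case unfolding Inv_def
  proof (intro conjI allI impI)
    fix h1 h2 assume "hdf (Later (Arr A B)) h1" "hdf (Arr (Later A) (Later B)) h2"
    then have "h1 = HArr 1 A B" "h2 = HArr 0 (Later A) (Later B)" using f1 f2 hd_det by blast+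
    then show "compat d h1 h2" using cp by simp
  next
    fix h1 assume "hdf (Later (Arr A B)) h1" "\<forall>h2. \<not> hdf (Arr (Later A) (Later B)) h2"
    then show "inff d h1" by simp
  next
    fix h2 assume "hdf (Arr (Later A) (Later B)) h2" "\<forall>h1. \<not> hdf (Later (Arr A B)) h1"
    then show "inff d h2" using f1 by blast
  qed
qed



definition shr :: "nat \<Rightarrow> nat \<Rightarrow> nat \<Rightarrow> ty" where
  "shr n c i = TVar (if i < c then i else i + n)"

definition sh :: "nat \<Rightarrow> nat \<Rightarrow> ty \<Rightarrow> ty" where
  "sh n c X = psubst (shr n c) X"

fun strip :: "nat \<Rightarrow> ty \<Rightarrow> ty" where
  "strip d (TVar i) = (if i < d then TVar i else TVar (i + d))"
| "strip d (Later A) = sh d 0 A"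
| "strip d (Arr A B) = Arr (strip d A) (strip d B)"
| "strip d (Mu A) = Mu (subst (Suc d) (strip (Suc d) A) (sh (Suc d) 0 (Mu A)))"

lemma sh00: "sh 0 0 X = X"
  unfolding sh_def shr_def by (simp add: ps_id)

lemma FR: "(\<And>j. dA \<le> j \<Longrightarrow> dR \<le> r j) \<Longrightarrow>
  strip dR (psubst (\<lambda>i. TVar (r i)) A) =
  psubst (\<lambda>u. if u < dA then strip dR (TVar (r u)) else TVar (r (u - dA) + dR)) (strip dA A)"
proof (induction A arbitrary: r dA dR)
  case (TVar j)
  show ?case
  proof (cases "j < dA")
    case False
    then have "dR \<le> r j" using TVar.prems by auto
    with False show ?thesis by simp
  qed simp
next
  case (Arr A1 A2)
  then show ?case by simp
next
  case (Later A)
  show ?case unfolding strip.simps sh_def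
    by (simp add: ps_ps ps_ren_ps shr_def sh_def del: psubst_Mu)
next
  case (Mu A)
  define r' where "r' = (\<lambda>i. case i of 0 \<Rightarrow> 0 | Suc k \<Rightarrow> Suc (r k))"
  define \<tau> where "\<tau> = (\<lambda>u. if u < dA then strip dR (TVar (r u)) else TVar (r (u - dA) + dR))"
  define \<tau>' where "\<tau>' = (\<lambda>u. if u < Suc dA then strip (Suc dR) (TVar (r' u)) else TVar (r' (u - Suc dA) + Suc dR))"
  define G where "G = strip (Suc dA) A"
  have IH: "strip (Suc dR) (psubst (\<lambda>i. TVar (r' i)) A) = psubst \<tau>' G"
    unfolding \<tau>'_def G_def using Mu.prems by (intro Mu.IH) (auto simp: r'_def split: nat.splits)
  have e1: "psubst (\<lambda>i. TVar (r i)) (Mu A) = Mu (psubst (\<lambda>i. TVar (r' i)) A)"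
    by (simp add: up_ren_comp r'_def)
  define TL where "TL = sh (Suc dR) 0 (psubst (\<lambda>i. TVar (r i)) (Mu A))"
  define TA where "TA = sh (Suc dA) 0 (Mu A)"
  have L: "strip dR (psubst (\<lambda>i. TVar (r i)) (Mu A)) = Mu (psubst (\<lambda>u. psubst (sb (Suc dR) TL) (\<tau>' u)) G)"
    unfolding e1 strip.simps IH subst_ps ps_ps TL_def e1 ..
  have R: "psubst \<tau> (strip dA (Mu A)) = Mu (psubst (\<lambda>u. psubst (up \<tau>) (sb (Suc dA) TA u)) G)"
    unfolding strip.simps subst_ps TA_def G_def by (simp add: ps_ps)
  have pw: "psubst (sb (Suc dR) TL) (\<tau>' u) = psubst (up \<tau>) (sb (Suc dA) TA u)" for u
  proof -
    consider "u = 0" | "0 < u" "u < Suc dA" | "u = Suc dA" | "Suc dA < u" by linarith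
    then show ?thesis
    proof cases
      case 1 then show ?thesis by (simp add: \<tau>'_def r'_def sb_def)
    next
      case 2 then show ?thesis
        by (cases u) (auto simp: \<tau>'_def r'_def sb_def \<tau>_def)
    next
      case 3
      have "psubst (up \<tau>) TA = psubst (\<lambda>j. TVar (Suc (r j + dR))) (Mu A)"
        unfolding TA_def sh_def ps_ps
        by (rule ps_cong) (simp add: shr_def \<tau>_def del: psubst_Mu)
      moreover have "TL = psubst (\<lambda>j. TVar (Suc (r j + dR))) (Mu A)"
        unfolding TL_def sh_def ps_ren_ps by (rule ps_cong) (simp add: shr_def)
      ultimately show ?thesis using 3 by (simp add: \<tau>'_def r'_def sb_def del: psubst_Mu)
    next
      case 4
      then obtain v where v: "u = Suc (Suc (dA + v))" by (metis Suc_lessE add_Suc_right less_imp_Suc_add)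
      then show ?thesis by (auto simp: \<tau>'_def r'_def sb_def \<tau>_def)
    qed
  qed
  show ?case
    unfolding \<tau>_def[symmetric] L R using pw by simp
qed

lemma FL: "subst (Suc d) (strip (Suc d) (lift 0 Y)) T = lift 0 (strip d Y)"
proof -
  have e: "strip (Suc d) (psubst (\<lambda>i. TVar (Suc i)) Y) = psubst (\<lambda>u. if u < d then strip (Suc d) (TVar (Suc u)) else TVar (Suc (u - d) + Suc d)) (strip d Y)"
    by (rule FR) auto
  show ?thesis unfolding subst_ps lift0 e ps_ps by (rule ps_cong) (auto simp: sb_def)
qed

lemma LS: "lift 0 (sh d 0 X) = sh (Suc d) 0 X"
  unfolding lift0 sh_def ren_ps_ps by (rule ps_cong) (simp add: shr_def)

lemma LS2: "psubst (sb (Suc d) T) (sh (Suc d) 0 (lift 0 X)) = sh (Suc d) 0 X"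
  unfolding lift0 sh_def ps_ren_ps ps_ps by (rule ps_cong) (simp add: shr_def sb_def)

lemma FG: "(\<And>j. dA \<le> j \<Longrightarrow> \<exists>m. dR \<le> m \<and> \<sigma> j = TVar m) \<Longrightarrow>
  strip dR (psubst \<sigma> A) =
  psubst (\<lambda>u. if u < dA then strip dR (\<sigma> u) else sh dR 0 (\<sigma> (u - dA))) (strip dA A)"
proof (induction A arbitrary: \<sigma> dA dR)
  case (TVar j)
  show ?case
  proof (cases "j < dA")
    case False
    with TVar.prems[of j] obtain m where "dR \<le> m" "\<sigma> j = TVar m" by auto
    with False show ?thesis by (simp add: sh_def shr_def)
  qed simp
next
  case (Arr A1 A2)
  then show ?case by simp
next
  case (Later A)
  show ?case unfolding strip.simps sh_def
    by (simp add: ps_ps shr_def sh_def del: psubst_Mu)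
next
  case (Mu A)
  define \<tau> where "\<tau> = (\<lambda>u. if u < dA then strip dR (\<sigma> u) else sh dR 0 (\<sigma> (u - dA)))"
  define \<tau>' where "\<tau>' = (\<lambda>u. if u < Suc dA then strip (Suc dR) (up \<sigma> u) else sh (Suc dR) 0 (up \<sigma> (u - Suc dA)))"
  define G where "G = strip (Suc dA) A"
  have IH: "strip (Suc dR) (psubst (up \<sigma>) A) = psubst \<tau>' G"
    unfolding \<tau>'_def G_def
  proof (rule Mu.IH)
    fix j assume "Suc dA \<le> j"
    then obtain k where k: "j = Suc k" "dA \<le> k" by (cases j) auto
    with Mu.prems[of k] obtain m where "dR \<le> m" "\<sigma> k = TVar m" by auto
    with k show "\<exists>m. Suc dR \<le> m \<and> up \<sigma> j = TVar m" by auto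
  qed
  define TL where "TL = sh (Suc dR) 0 (psubst \<sigma> (Mu A))"
  define TA where "TA = sh (Suc dA) 0 (Mu A)"
  have L: "strip dR (psubst \<sigma> (Mu A)) = Mu (psubst (\<lambda>u. psubst (sb (Suc dR) TL) (\<tau>' u)) G)"
    unfolding psubst_Mu strip.simps IH subst_ps ps_ps TL_def ..
  have R: "psubst \<tau> (strip dA (Mu A)) = Mu (psubst (\<lambda>u. psubst (up \<tau>) (sb (Suc dA) TA u)) G)"
    unfolding strip.simps subst_ps TA_def G_def by (simp add: ps_ps)
  have pw: "psubst (sb (Suc dR) TL) (\<tau>' u) = psubst (up \<tau>) (sb (Suc dA) TA u)" for u
  proof -
    consider "u = 0" | k where "u = Suc k" "k < dA" | "u = Suc dA" | v where "u = Suc (Suc (dA + v))"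
      by (metis Suc_lessE add_Suc_right less_imp_Suc_add linorder_neqE_nat not0_implies_Suc)
    then show ?thesis
    proof cases
      case 1 then show ?thesis by (simp add: \<tau>'_def sb_def)
    next
      case 2 then show ?thesis
        using FL[of dR "\<sigma> k" TL] by (simp add: \<tau>'_def sb_def \<tau>_def subst_ps)
    next
      case 3
      have "psubst (up \<tau>) TA = psubst (\<lambda>j. lift 0 (sh dR 0 (\<sigma> j))) (Mu A)"
        unfolding TA_def sh_def ps_ps
        by (rule ps_cong) (simp add: shr_def \<tau>_def sh_def del: psubst_Mu)
      moreover have "TL = psubst (\<lambda>j. lift 0 (sh dR 0 (\<sigma> j))) (Mu A)"
        unfolding TL_def LS by (simp add: sh_def ps_ps del: psubst_Mu)
      ultimately show ?thesis using 3 by (simp add: \<tau>'_def sb_def sh_def shr_def del: psubst_Mu)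
    next
      case 4
      then show ?thesis using LS2[of dR TL "\<sigma> v"] LS[of dR "\<sigma> v"]
        by (simp add: \<tau>'_def sb_def \<tau>_def)
    qed
  qed
  show ?case
    unfolding \<tau>_def[symmetric] L R using pw by simp
qed

lemma SH1: "psubst (sb 0 t) (sh (Suc 0) 0 s) = s"
  unfolding sh_def ps_ps by (rule HOL.trans[OF ps_cong ps_id]) (simp add: sb_def shr_def)

lemma SH0: "psubst (shr 0 0) s = s"
  using sh00 unfolding sh_def .

lemma strip_subst0: "strip 0 (subst 0 A s) = subst 0 (subst 1 (strip 1 A) (sh 1 0 s)) (strip 0 s)"
proof -
  have "strip 0 (psubst (sb 0 s) A) =
    psubst (\<lambda>u. if u < 1 then strip 0 (sb 0 s u) else sh 0 0 (sb 0 s (u - 1))) (strip 1 A)"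
    by (rule FG) (auto simp: sb_def)
  then show ?thesis unfolding subst_ps
    apply simp
    unfolding ps_ps
    apply (rule ps_cong)
    apply (auto simp: sb_def sh00 SH1)
    done
qed

lemma pe_sh: "pe (sh n c X) = (case pe X of Fr i k \<Rightarrow> Fr (if i < c then i else i + n) k | b \<Rightarrow> b)"
  unfolding sh_def shr_def using pe_ren[of "\<lambda>i. if i < c then i else i + n" X] by simp

lemma pe_strip: "case pe X of Bnd b \<Rightarrow> (\<exists>b'. pe (strip d X) = Bnd b' \<and> (b \<longrightarrow> b'))
   | Fr i c \<Rightarrow> pe (strip d X) = (if c = 0 then Fr (if i < d then i else i + d) 0 else Fr (i + d) (c - 1))"
proof (induction X arbitrary: d)
  case (TVar x)
  then show ?case by simp
next
  case (Arr X1 X2)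
  show ?case by (simp only: strip.simps pe.simps) (rule Arr.IH(2))
next
  case (Later X)
  then show ?case by (auto simp: pe_sh split: pend.splits)
next
  case (Mu A)
  have pT: "pe (sh (Suc d) 0 (Mu A)) = (case pe (Mu A) of Fr i k \<Rightarrow> Fr (i + Suc d) k | b \<Rightarrow> b)"
    by (simp add: pe_sh del: pe.simps split: pend.splits)
  have e: "pe (strip d (Mu A)) = (case pe (strip (Suc d) A) of Bnd b \<Rightarrow> Bnd b |
     Fr 0 c \<Rightarrow> Bnd (1 \<le> c) | Fr (Suc i) c \<Rightarrow> Fr i c) \<or> True" by simp
  show ?case
  proof (cases "pe A")
    case (Bnd b)
    with Mu.IH[of "Suc d"] obtain b' where "pe (strip (Suc d) A) = Bnd b'" "b \<longrightarrow> b'" by auto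
    then show ?thesis using Bnd by (simp add: subst_ps pe_ps)
  next
    case (Fr i c)
    note IH = Mu.IH[of "Suc d", unfolded Fr, simplified]
    show ?thesis
    proof (cases i)
      case 0
      show ?thesis
      proof (cases "c = 0")
        case True then show ?thesis using IH Fr 0 by (auto simp: subst_ps pe_ps sb_def)
      next
        case False
        then have "pe (Mu A) = Bnd True" using Fr 0 by simp
        then have "pe (sh (Suc d) 0 (Mu A)) = Bnd True" using pT by simp
        then show ?thesis using IH Fr 0 False by (auto simp: subst_ps pe_ps sb_def)
      qed
    next
      case (Suc i')
      then show ?thesis using IH Fr by (auto simp: subst_ps pe_ps sb_def)
    qed
  qed
qed

lemma tv_strip: "top_variant X \<Longrightarrow> top_variant (strip d X)"
  using pe_strip[where X=X and d=d] by (auto simp: top_variant_pe)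

lemma up_shr: "up (shr n c) = shr n (Suc c)"
  by (rule ext) (auto simp: up_def shr_def split: nat.splits)

lemma proper_sh: "c \<le> k \<Longrightarrow> k < c + n \<Longrightarrow> proper k (sh n c X)"
  unfolding sh_def
proof (induction X arbitrary: c k)
  case (Mu X)
  then show ?case by (simp add: up_shr)
qed (auto simp: shr_def)

lemma proper_strip: "proper k X \<Longrightarrow> k < d \<Longrightarrow> proper k (strip d X)"
proof (induction X arbitrary: k d)
  case (TVar x)
  then show ?case by auto
next
  case (Arr X1 X2)
  then show ?case using tv_strip by auto
next
  case (Later X)
  then show ?case by (auto intro: proper_sh)
next
  case (Mu A)
  show ?case
  proof (cases "proper (Suc k) A")
    case True
    then have p: "proper (Suc k) (strip (Suc d) A)" using Mu by auto
    have "proper (Suc k) (psubst (sb (Suc d) (sh (Suc d) 0 (Mu A))) (strip (Suc d) A))"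
    proof (rule proper_ps[OF p])
      show "sb (Suc d) (sh (Suc d) 0 (Mu A)) (Suc k) = TVar (Suc k)" using Mu.prems by (simp add: sb_def)
      fix j :: nat assume "j \<noteq> Suc k"
      then show "proper (Suc k) (sb (Suc d) (sh (Suc d) 0 (Mu A)) j)"
        using Mu.prems by (auto simp: sb_def intro: proper_sh)
    qed
    then show ?thesis by (simp add: subst_ps)
  next
    case False
    then have "top_variant (Mu A)" using Mu.prems by simp
    then have "top_variant (strip d (Mu A))" by (rule tv_strip)
    then show ?thesis by (metis proper.simps(4) strip.simps(4))
  qed
qed

lemma wfty_sh: "wfty X \<Longrightarrow> wfty (sh n c X)"
  unfolding sh_def by (rule wfty_ps) (auto simp: shr_def intro: wfty.intros)

lemma wfty_strip: "wfty X \<Longrightarrow> wfty (strip d X)"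
proof (induction X arbitrary: d rule: wfty.induct)
  case (1 i) then show ?case by (auto intro: wfty.intros)
next
  case (2 A B) then show ?case by (auto intro: wfty.intros)
next
  case (3 A) then show ?case by (auto intro: wfty_sh)
next
  case (4 A)
  have wT: "wfty (sh (Suc d) 0 (Mu A))" using 4 by (auto intro: wfty_sh wfty.intros)
  have w: "wfty (subst (Suc d) (strip (Suc d) A) (sh (Suc d) 0 (Mu A)))"
    using 4 wT by (auto intro: wfty_subst)
  have p: "proper 0 (strip (Suc d) A)" using 4 by (auto intro: proper_strip)
  have "proper 0 (psubst (sb (Suc d) (sh (Suc d) 0 (Mu A))) (strip (Suc d) A))"
  proof (rule proper_ps[OF p])
    show "sb (Suc d) (sh (Suc d) 0 (Mu A)) 0 = TVar 0" by (simp add: sb_def)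
    fix j :: nat assume "j \<noteq> 0"
    then show "proper 0 (sb (Suc d) (sh (Suc d) 0 (Mu A)) j)"
      by (auto simp: sb_def intro: proper_sh)
  qed
  then show ?case using w by (auto simp: subst_ps intro: wfty.intros)
qed

lemma strip_top: "strip 0 top = Mu top"
proof -
  have "sh (Suc 0) 0 top = top" unfolding sh_def by simp
  moreover have "sh (Suc 0) 0 (TVar 0) = TVar 1" by (simp add: sh_def shr_def)
  ultimately show ?thesis by (simp add: top_def[symmetric]) (simp add: top_def)
qed

lemma Mu_top: "teq d (Mu top) top"
proof -
  have w: "wfty (Mu top)" by (auto intro!: wfty.intros simp: top_def)
  have "subst 0 top (Mu top) = top" unfolding subst_ps by simp
  then show ?thesis using teq.unfold[OF w] by simp
qed

theorem teq_strip: "teq d X Y \<Longrightarrow> teq d (strip 0 X) (strip 0 Y)"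
proof (induction rule: teq.induct)
  case (refl A) then show ?case by (intro teq.refl wfty_strip)
next
  case (sym A B) show ?case using sym.IH by (rule teq.sym)
next
  case (trans A B C) show ?case using trans.IH by (rule teq.trans)
next
  case (later A B) then show ?case by (simp add: sh00)
next
  case (arr A C B D) show ?case using arr.IH by simp (rule teq.arr)
next
  case (arr_top A)
  have wA: "wfty (strip 0 A)" using arr_top wfty_strip by blast
  have "teq d (Arr (strip 0 A) (Mu top)) (Arr (strip 0 A) top)"
    using wA Mu_top by (auto intro: teq.arr teq.refl)
  moreover have "teq d (Arr (strip 0 A) top) top" using wA by (rule teq.arr_top)
  ultimately have "teq d (Arr (strip 0 A) (Mu top)) (Mu top)"
    using Mu_top by (blast intro: teq.trans teq.sym)
  then show ?case by (simp only: strip.simps(3) strip_top)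
next
  case (unfold A)
  define B where "B = subst 1 (strip 1 A) (sh 1 0 (Mu A))"
  have e: "strip 0 (Mu A) = Mu B" by (simp add: B_def)
  have w: "wfty (Mu B)" using unfold wfty_strip e by metis
  show ?case unfolding strip_subst0 B_def[symmetric] e by (rule teq.unfold[OF w])
next
  case (fold A C)
  define DA where "DA = subst 1 (strip 1 C) (sh 1 0 A)"
  define DM where "DM = subst 1 (strip 1 C) (sh 1 0 (Mu C))"
  have e: "strip 0 (Mu C) = Mu DM" by (simp add: DM_def)
  have wM: "wfty (Mu DM)" using fold wfty_strip e by metis
  have tAM: "teq d A (Mu C)" using fold by (auto intro: teq.fold)
  have wA: "wfty (strip 0 A)" using fold teq_wfty wfty_strip by blast
  have wC: "wfty (strip 1 C)" using fold by (auto elim: wfty.cases intro: wfty_strip)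
  have "teq d (sh 1 0 A) (sh 1 0 (Mu C))"
    unfolding sh_def using tAM by (rule teq_ps) (auto simp: shr_def intro: wfty.intros)
  then have "teq d DA DM" unfolding DA_def DM_def subst_ps
    using wC by (intro teq_cong) (auto simp: sb_def intro: teq.refl wfty.intros)
  then have "teq d (subst 0 DA (strip 0 A)) (subst 0 DM (strip 0 A))"
    using wA by (rule teq_subst)
  moreover have "teq d (strip 0 A) (subst 0 DA (strip 0 A))"
    using fold.IH unfolding strip_subst0 DA_def .
  ultimately have "teq d (strip 0 A) (subst 0 DM (strip 0 A))" by (rule teq.trans[rotated])
  then show ?case unfolding e using wM by (rule teq.fold)
next
  case (distr A B)
  have "wfty (Arr A B)" using distr by (auto intro: wfty.intros)
  then show ?case by (simp add: sh00 teq.refl)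
qed

theorem proposition4:
  assumes "R = tcong \<or> R = tsimeq"
    and "wfty A" and "wfty B" and "wfty C" and "wfty D"
  shows "(R (Later A) (Later B) \<longleftrightarrow> R A B) \<and>
         (R (Arr A B) (Arr C D) \<longleftrightarrow> ((R A C \<and> R B D) \<or> (R B D \<and> R D top)))"
proof -
  obtain d where R: "R = teq d" using assms(1) unfolding tcong_def tsimeq_def by blast
  have p1: "teq d (Later A) (Later B) \<longleftrightarrow> teq d A B"
  proof
    assume "teq d (Later A) (Later B)"
    from teq_strip[OF this] show "teq d A B" by (simp add: sh00)
  qed (rule teq.later)
  have p2: "teq d (Arr A B) (Arr C D) \<longleftrightarrow> ((teq d A C \<and> teq d B D) \<or> (teq d B D \<and> teq d D top))"
  proof
    assume "teq d (Arr A B) (Arr C D)"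
    then have "compat d (HArr 0 A B) (HArr 0 C D)" by (rule InvD1[OF teq_Inv]) simp_all
    then show "(teq d A C \<and> teq d B D) \<or> (teq d B D \<and> teq d D top)" by (cases d) simp_all
  next
    assume a: "(teq d A C \<and> teq d B D) \<or> (teq d B D \<and> teq d D top)"
    show "teq d (Arr A B) (Arr C D)"
    proof (cases "teq d A C \<and> teq d B D")
      case True then show ?thesis by (blast intro: teq.arr)
    next
      case False
      then have bt: "teq d B top" "teq d D top" using a by (meson teq.trans)+
      have "teq d (Arr A B) (Arr A top)" by (rule teq.arr[OF teq.refl[OF assms(2)] bt(1)])
      moreover have "teq d (Arr A top) top" by (rule teq.arr_top[OF assms(2)])
      moreover have "teq d (Arr C D) (Arr C top)" by (rule teq.arr[OF teq.refl[OF assms(4)] bt(2)])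
      moreover have "teq d (Arr C top) top" by (rule teq.arr_top[OF assms(4)])
      ultimately show ?thesis by (meson teq.trans teq.sym)
    qed
  qed
  show ?thesis using p1 p2 R by simp
qed


end
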